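(* Let $M\in(0,1)$ and $\overline{\mathcal B}_M=\{F_{M,V}:V\in[0,D(M)]\}$. Then $\overline{\mathcal B}_M$ is totally ordered by $\preceq_{\text{ssd}}$, with maximum $F_{M,0}$ and minimum $F_{M,D(M)}$; more precisely, for all $0<V_1<V_2<D(M)$, $F_{M,D(M)}\preceq_{\text{ssd}}F_{M,V_2}\preceq_{\text{ssd}}F_{M,V_1}\preceq_{\text{ssd}}F_{M,0}$. Moreover $F_{M,0}=\sup\{F_{M,V}:0<V<D(M)\}$ and $F_{M,D(M)}=\inf\{F_{M,V}:0<V<D(M)\}$ for $\preceq_{\text{ssd}}$.
   Context: $D(M)=M-M^2$. For $0<V<D(M)$, $F_{M,V}$ is the distribution function of the Beta$(\alpha,\beta)$ law with $\alpha=\frac{M(M-M^2-V)}{V}$, $\beta=\frac{(1-M)(M-M^2-V)}{V}$ (mean $M$, variance $V$). Boundary laws: $F_{M,0}(x)=0$ for $x<M$ and $=1$ for $x\ge M$ (Dirac mass at $M$); $F_{M,D(M)}(x)=1-M$ for $0\le x<1$ and $F_{M,D(M)}(1)=1$ (the law $(1-M)\delta_0+M\delta_1$). $F_1\preceq_{\text{ssd}}F_2$ means $\int_0^xF_2(t)dt\le\int_0^xF_1(t)dt$ for all $x\in[0,1]$. *)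

theory Defs
  imports "HOL-Analysis.Analysis"
begin

definition D :: "real \<Rightarrow> real" where
  "D M = M - M^2"

definition beta_alpha :: "real \<Rightarrow> real \<Rightarrow> real" where
  "beta_alpha M V = M * (M - M^2 - V) / V"

definition beta_beta :: "real \<Rightarrow> real \<Rightarrow> real" where
  "beta_beta M V = (1 - M) * (M - M^2 - V) / V"

definition beta_cdf :: "real \<Rightarrow> real \<Rightarrow> real \<Rightarrow> real" where
  "beta_cdf a b x =
     (if x < 0 then 0 else if 1 \<le> x then 1
      else integral {0..x} (\<lambda>t. t powr (a - 1) * (1 - t) powr (b - 1)) / Beta a b)"

text \<open>F_{M,V}: Dirac at M for V = 0, (1-M)delta_0 + M delta_1 for V = D M,
  Beta law with mean M and variance V for 0 < V < D M.\<close>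
definition FMV :: "real \<Rightarrow> real \<Rightarrow> real \<Rightarrow> real" where
  "FMV M V x =
     (if V = 0 then (if x < M then 0 else 1)
      else if V = D M then (if x < 0 then 0 else if x < 1 then 1 - M else 1)
      else beta_cdf (beta_alpha M V) (beta_beta M V) x)"

definition ssd :: "(real \<Rightarrow> real) \<Rightarrow> (real \<Rightarrow> real) \<Rightarrow> bool" where
  "ssd F1 F2 \<longleftrightarrow> (\<forall>x\<in>{0..1}. integral {0..x} F2 \<le> integral {0..x} F1)"

definition dist_fun01 :: "(real \<Rightarrow> real) \<Rightarrow> bool" where
  "dist_fun01 H \<longleftrightarrow> mono H \<and> (\<forall>x. continuous (at_right x) H)
     \<and> (\<forall>x<0. H x = 0) \<and> (\<forall>x\<ge>1. H x = 1)"

definition ssd_sup :: "(real \<Rightarrow> real) set \<Rightarrow> (real \<Rightarrow> real) \<Rightarrow> bool" where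
  "ssd_sup S G \<longleftrightarrow> (\<forall>F\<in>S. ssd F G) \<and>
     (\<forall>H. dist_fun01 H \<longrightarrow> (\<forall>F\<in>S. ssd F H) \<longrightarrow> ssd G H)"

definition ssd_inf :: "(real \<Rightarrow> real) set \<Rightarrow> (real \<Rightarrow> real) \<Rightarrow> bool" where
  "ssd_inf S G \<longleftrightarrow> (\<forall>F\<in>S. ssd G F) \<and>
     (\<forall>H. dist_fun01 H \<longrightarrow> (\<forall>F\<in>S. ssd H F) \<longrightarrow> ssd H G)"

end

theory Submission
  imports Defs
begin


lemma Beta_pos: "0 < a \<Longrightarrow> 0 < b \<Longrightarrow> 0 < Beta a (b::real)"
  unfolding Beta_def by simp

definition u :: "real \<Rightarrow> real \<Rightarrow> real \<Rightarrow> real" where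
  "u a b t = t powr (a - 1) * (1 - t) powr (b - 1)"

lemma u_nonneg: "0 \<le> u a b t" unfolding u_def by simp

lemma u_int: "0 < a \<Longrightarrow> 0 < b \<Longrightarrow> (u a b has_integral Beta a b) {0..1}"
  unfolding u_def by (rule has_integral_Beta_real)

lemma u1_int: assumes "0 < a" "0 < b"
  shows "((\<lambda>t. t * u a b t) has_integral Beta (a+1) b) {0..1}"
proof -
  have "((\<lambda>t. u (a+1) b t) has_integral Beta (a+1) b) {0..1}" using assms by (intro u_int) auto
  moreover have eq: "t * u a b t = u (a+1) b t" if "t \<in> {0..1}" for t
  proof (cases "t = 0")
    case False with that have "t > 0" by auto
    then show ?thesis unfolding u_def by (simp add: powr_add powr_diff)
  qed (simp add: u_def)
  moreover note has_integral_cong[of "{0..1}" "\<lambda>t. t * u a b t" "u (a+1) b", OF eq]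
  ultimately show ?thesis by blast
qed

lemma u2_int: assumes "0 < a" "0 < b"
  shows "((\<lambda>t. t^2 * u a b t) has_integral Beta (a+2) b) {0..1}"
proof -
  have "((\<lambda>t. u (a+2) b t) has_integral Beta (a+2) b) {0..1}" using assms by (intro u_int) auto
  moreover have eq: "t^2 * u a b t = u (a+2) b t" if "t \<in> {0..1}" for t
  proof (cases "t = 0")
    case False with that have "t > 0" by auto
    then show ?thesis unfolding u_def by (simp add: powr_add powr_diff power2_eq_square)
  qed (simp add: u_def)
  moreover note has_integral_cong[of "{0..1}" "\<lambda>t. t^2 * u a b t" "u (a+2) b", OF eq]
  ultimately show ?thesis by blast
qed

lemma Beta1: fixes a b :: real assumes "0 < a" "0 < b" shows "Beta (a+1) b = a / (a+b) * Beta a b"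
proof -
  have "a \<notin> \<int>\<^sub>\<le>\<^sub>0"
  proof
    assume "a \<in> \<int>\<^sub>\<le>\<^sub>0"
    then obtain n where "a = of_int n" "n \<le> 0" by (auto elim!: nonpos_Ints_cases)
    then have "a \<le> 0" by simp
    with assms show False by simp
  qed
  from Beta_plus1_left[OF this, of b] assms show ?thesis by (simp add: field_simps)
qed

lemma Beta2: fixes a b :: real assumes "0 < a" "0 < b" shows "Beta (a+2) b = a*(a+1) / ((a+b)*(a+b+1)) * Beta a b"
proof -
  have "Beta (a+2) b = Beta ((a+1)+1) b" by (simp add: add.assoc)
  also have "\<dots> = (a+1)/((a+1)+b) * Beta (a+1) b" using assms by (intro Beta1) auto
  also have "\<dots> = (a+1)/((a+1)+b) * (a / (a+b) * Beta a b)" by (simp only: Beta1[OF assms])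
  also have "\<dots> = a*(a+1) / ((a+b)*(a+b+1)) * Beta a b"
    by (simp add: ac_simps)
  finally show ?thesis .
qed

lemma u_cont: "0 < t \<Longrightarrow> t < 1 \<Longrightarrow> isCont (u a b) t"
  unfolding u_def by (intro continuous_intros) auto


lemma u_integrable: assumes "0 < a" "0 < b" "{c..d} \<subseteq> {0..1}"
  shows "u a b integrable_on {c..d}"
  using integrable_on_subinterval[OF has_integral_integrable[OF u_int[OF assms(1,2)]] assms(3)] .

lemma u1_integrable: assumes "0 < a" "0 < b" "{c..d} \<subseteq> {0..1}"
  shows "(\<lambda>t. t * u a b t) integrable_on {c..d}"
  using integrable_on_subinterval[OF has_integral_integrable[OF u1_int[OF assms(1,2)]] assms(3)] .

lemma u2_integrable: assumes "0 < a" "0 < b" "{c..d} \<subseteq> {0..1}"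
  shows "(\<lambda>t. t^2 * u a b t) integrable_on {c..d}"
  using integrable_on_subinterval[OF has_integral_integrable[OF u2_int[OF assms(1,2)]] assms(3)] .

lemma int_deriv:
  fixes f :: "real \<Rightarrow> real"
  assumes "f integrable_on {0..1}" "0 < x" "x < 1" "isCont f x"
  shows "((\<lambda>y. integral {0..y} f) has_real_derivative f x) (at x)"
proof -
  have "((\<lambda>y. integral {0..y} f) has_vector_derivative f x) (at x within ({0..1} - {}))"
    by (rule integral_has_vector_derivative_continuous_at)
       (use assms in \<open>auto intro: continuous_at_imp_continuous_within\<close>)
  moreover have "at x within {0..1} = at x"
    by (rule at_within_interior) (use assms in auto)
  ultimately show ?thesis by (simp add: has_real_derivative_iff_has_vector_derivative)
qed

lemma cdf_eq: assumes "0 < a" "0 < b" "x \<in> {0..1}"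
  shows "beta_cdf a b x = integral {0..x} (u a b) / Beta a b"
proof (cases "x = 1")
  case True
  then show ?thesis using integral_unique[OF u_int[OF assms(1,2)]] Beta_pos[OF assms(1,2)]
    by (simp add: beta_cdf_def)
next
  case False
  then show ?thesis using assms by (simp add: beta_cdf_def u_def[abs_def])
qed

lemma cdf_cont: assumes "0 < a" "0 < b"
  shows "continuous_on {0..1} (beta_cdf a b)"
proof -
  have "continuous_on {0..1} (\<lambda>x. integral {0..x} (u a b) / Beta a b)"
    by (intro continuous_on_divide continuous_on_const indefinite_integral_continuous_1
        u_integrable) (use assms Beta_pos[OF assms] in auto)
  then show ?thesis by (rule continuous_on_cong[THEN iffD1, rotated 2]) (use assms cdf_eq in auto)
qed

lemma cdf_deriv: assumes "0 < a" "0 < b" "0 < x" "x < 1"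
  shows "(beta_cdf a b has_real_derivative u a b x / Beta a b) (at x)"
proof -
  have "((\<lambda>y. integral {0..y} (u a b)) has_real_derivative u a b x) (at x)"
    by (rule int_deriv) (use assms u_cont u_integrable in auto)
  then have "((\<lambda>y. integral {0..y} (u a b) / Beta a b) has_real_derivative u a b x / Beta a b) (at x)"
    by (rule DERIV_cdivide)
  then show ?thesis
    by (rule has_field_derivative_transform_within_open[where S="{0<..<1}"])
       (use assms cdf_eq in auto)
qed

lemma cdf_int: assumes "0 < a" "0 < b" "x \<in> {0..1}"
  shows "integral {0..x} (beta_cdf a b) = integral {0..x} (\<lambda>t. (x - t) * u a b t) / Beta a b"
proof -
  define B where "B = Beta a b"
  have B: "B > 0" using Beta_pos assms B_def by auto
  define \<Phi> where "\<Phi> y = integral {0..y} (beta_cdf a b) -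
      (y * integral {0..y} (u a b) - integral {0..y} (\<lambda>t. t * u a b t)) / B" for y
  have cont: "continuous_on {0..1} \<Phi>"
    unfolding \<Phi>_def
    by (intro continuous_intros indefinite_integral_continuous_1 u_integrable u1_integrable
        integrable_continuous_interval cdf_cont) (use assms B in auto)
  have der: "(\<Phi> has_real_derivative 0) (at y)" if y: "0 < y" "y < 1" for y
  proof -
    have i1: "beta_cdf a b integrable_on {0..1}"
      using integrable_continuous_interval[OF cdf_cont[OF assms(1,2)]] .
    have c1: "isCont (beta_cdf a b) y" using DERIV_isCont[OF cdf_deriv[OF assms(1,2) y]] .
    have d1: "((\<lambda>y. integral {0..y} (beta_cdf a b)) has_real_derivative beta_cdf a b y) (at y)"
      using int_deriv[OF i1 y c1] .
    have d2: "((\<lambda>y. integral {0..y} (u a b)) has_real_derivative u a b y) (at y)"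
      by (rule int_deriv) (use assms y u_cont u_integrable in auto)
    have c3: "isCont (\<lambda>t. t * u a b t) y"
      using u_cont[OF y, of a b] by (intro continuous_intros) auto
    have d3: "((\<lambda>y. integral {0..y} (\<lambda>t. t * u a b t)) has_real_derivative y * u a b y) (at y)"
      by (rule int_deriv[OF _ y c3]) (use assms u1_integrable in auto)
    have d4: "((\<lambda>y. y * integral {0..y} (u a b)) has_real_derivative
        (1 * integral {0..y} (u a b) + u a b y * y)) (at y)"
      by (rule DERIV_mult[OF DERIV_ident d2])
    have d5: "((\<lambda>y. (y * integral {0..y} (u a b) - integral {0..y} (\<lambda>t. t * u a b t)) / B)
        has_real_derivative ((1 * integral {0..y} (u a b) + u a b y * y) - y * u a b y) / B) (at y)"
      by (rule DERIV_cdivide[OF DERIV_diff[OF d4 d3]])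
    have "(\<Phi> has_real_derivative (beta_cdf a b y -
        ((1 * integral {0..y} (u a b) + u a b y * y) - y * u a b y) / B)) (at y)"
      unfolding \<Phi>_def[abs_def] by (rule DERIV_diff[OF d1 d5])
    moreover have "beta_cdf a b y -
        ((1 * integral {0..y} (u a b) + u a b y * y) - y * u a b y) / B = 0"
      using cdf_eq[OF assms(1,2), of y] y B_def by simp
    ultimately show ?thesis by simp
  qed
  have "\<Phi> x = \<Phi> 0"
  proof (cases "x = 0")
    case False
    then have x: "0 < x" "x \<le> 1" using assms by auto
    have "continuous_on {0..x} \<Phi>" by (rule continuous_on_subset[OF cont]) (use x in auto)
    from MVT[OF x(1) this] obtain l z where z: "0 < z" "z < x" "DERIV \<Phi> z :> l"
      "\<Phi> x - \<Phi> 0 = (x - 0) * l"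
      using der x by (force simp: real_differentiable_def)
    then have "l = 0" using der[of z] x DERIV_unique by fastforce
    then show ?thesis using z by simp
  qed simp
  then have "integral {0..x} (beta_cdf a b) =
      (x * integral {0..x} (u a b) - integral {0..x} (\<lambda>t. t * u a b t)) / B"
    by (simp add: \<Phi>_def)
  also have "x * integral {0..x} (u a b) - integral {0..x} (\<lambda>t. t * u a b t) =
      integral {0..x} (\<lambda>t. (x - t) * u a b t)"
  proof -
    have "integral {0..x} (\<lambda>t. (x - t) * u a b t) =
        integral {0..x} (\<lambda>t. x * u a b t - t * u a b t)"
      by (simp add: algebra_simps)
    also have "\<dots> = integral {0..x} (\<lambda>t. x * u a b t) - integral {0..x} (\<lambda>t. t * u a b t)"
      by (rule integral_diff) (use assms in \<open>auto intro!: integrable_on_mult_right u_integrable u1_integrable\<close>)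
    finally show ?thesis by simp
  qed
  finally show ?thesis by (simp add: B_def)
qed


definition pI :: "real \<Rightarrow> real \<Rightarrow> real \<Rightarrow> real \<Rightarrow> real \<Rightarrow> real" where
  "pI a b c0 c1 c2 = c0 * Beta a b + c1 * Beta (a+1) b + c2 * Beta (a+2) b"

lemma poly_hasint: assumes "0 < a" "0 < b"
  shows "((\<lambda>t. (c0 + c1*t + c2*t^2) * u a b t) has_integral pI a b c0 c1 c2) {0..1}"
proof -
  have "((\<lambda>t. c0 * u a b t + c1 * (t * u a b t) + c2 * (t^2 * u a b t)) has_integral
      (c0 * Beta a b + c1 * Beta (a+1) b + c2 * Beta (a+2) b)) {0..1}"
    by (intro has_integral_add has_integral_mult_right u_int u1_int u2_int assms)
  then show ?thesis unfolding pI_def by (simp add: algebra_simps)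
qed

lemma poly_integrable: assumes "0 < a" "0 < b" "{c..d} \<subseteq> {0..1}"
  shows "(\<lambda>t. (c0 + c1*t + c2*t^2) * u a b t) integrable_on {c..d}"
  using integrable_on_subinterval[OF has_integral_integrable[OF poly_hasint[OF assms(1,2)]] assms(3)] .

lemma split_le: assumes "0 < a" "0 < b" "x \<in> {0..1}"
  and "\<And>t. t \<in> {x..1} \<Longrightarrow> 0 \<le> c0 + c1*t + c2*t^2"
  shows "integral {0..x} (\<lambda>t. (c0 + c1*t + c2*t^2) * u a b t) \<le> pI a b c0 c1 c2"
proof -
  have "integral {0..x} (\<lambda>t. (c0 + c1*t + c2*t^2) * u a b t) +
        integral {x..1} (\<lambda>t. (c0 + c1*t + c2*t^2) * u a b t) =
        integral {0..1} (\<lambda>t. (c0 + c1*t + c2*t^2) * u a b t)"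
    by (rule Henstock_Kurzweil_Integration.integral_combine) (use assms poly_integrable in auto)
  moreover have "integral {0..1} (\<lambda>t. (c0 + c1*t + c2*t^2) * u a b t) = pI a b c0 c1 c2"
    by (rule integral_unique[OF poly_hasint[OF assms(1,2)]])
  moreover have "0 \<le> integral {x..1} (\<lambda>t. (c0 + c1*t + c2*t^2) * u a b t)"
    by (rule integral_nonneg) (use assms poly_integrable u_nonneg in auto)
  ultimately show ?thesis by linarith
qed

lemma split_ge: assumes "0 < a" "0 < b" "x \<in> {0..1}"
  and "\<And>t. t \<in> {x..1} \<Longrightarrow> c0 + c1*t + c2*t^2 \<le> 0"
  shows "pI a b c0 c1 c2 \<le> integral {0..x} (\<lambda>t. (c0 + c1*t + c2*t^2) * u a b t)"
proof -
  have "integral {0..x} (\<lambda>t. (c0 + c1*t + c2*t^2) * u a b t) +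
        integral {x..1} (\<lambda>t. (c0 + c1*t + c2*t^2) * u a b t) =
        integral {0..1} (\<lambda>t. (c0 + c1*t + c2*t^2) * u a b t)"
    by (rule Henstock_Kurzweil_Integration.integral_combine) (use assms poly_integrable in auto)
  moreover have "integral {0..1} (\<lambda>t. (c0 + c1*t + c2*t^2) * u a b t) = pI a b c0 c1 c2"
    by (rule integral_unique[OF poly_hasint[OF assms(1,2)]])
  moreover have "integral {x..1} (\<lambda>t. (c0 + c1*t + c2*t^2) * u a b t) \<le> integral {x..1} (\<lambda>t. 0)"
    by (rule integral_le) (use assms poly_integrable u_nonneg in \<open>auto intro!: mult_nonpos_nonneg\<close>)
  ultimately show ?thesis by simp
qed

lemma poly_cmp: assumes "0 < a" "0 < b" "x \<in> {0..1}"
  and "\<And>t. t \<in> {0..x} \<Longrightarrow> c0 + c1*t + c2*t^2 \<le> d0 + d1*t + d2*t^2"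
  shows "integral {0..x} (\<lambda>t. (c0 + c1*t + c2*t^2) * u a b t) \<le>
         integral {0..x} (\<lambda>t. (d0 + d1*t + d2*t^2) * u a b t)"
  by (rule integral_le) (use assms poly_integrable u_nonneg in \<open>auto intro!: mult_right_mono\<close>)

abbreviation Ix :: "real \<Rightarrow> real \<Rightarrow> real \<Rightarrow> real" where
  "Ix a b x \<equiv> integral {0..x} (\<lambda>t. (x - t) * u a b t)"

lemma Ix_poly: "Ix a b x = integral {0..x} (\<lambda>t. (x + (-1)*t + 0*t^2) * u a b t)"
  by simp

lemma Ix_integrable: assumes "0 < a" "0 < b" "x \<in> {0..1}"
  shows "(\<lambda>t. (x - t) * u a b t) integrable_on {0..x}"
  using poly_integrable[OF assms(1,2), of 0 x x "-1" 0] assms by simp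

lemma Ix_nonneg: assumes "0 < a" "0 < b" "x \<in> {0..1}" shows "0 \<le> Ix a b x"
  by (rule integral_nonneg[OF Ix_integrable[OF assms]]) (use assms u_nonneg in auto)

lemma Ix_L1: assumes "0 < a" "0 < b" "x \<in> {0..1}"
  shows "(x - a/(a+b)) * Beta a b \<le> Ix a b x"
proof -
  have "pI a b x (-1) 0 \<le> Ix a b x" unfolding Ix_poly
    by (rule split_ge) (use assms in auto)
  then show ?thesis unfolding pI_def Beta1[OF assms(1,2)] using assms by (simp add: algebra_simps)
qed

lemma Ix_L2: assumes "0 < a" "0 < b" "x \<in> {0..1}"
  shows "Ix a b x \<le> x * (1 - a/(a+b)) * Beta a b"
proof -
  have "Ix a b x \<le> integral {0..x} (\<lambda>t. (x + (-x)*t + 0*t^2) * u a b t)" unfolding Ix_poly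
    by (rule poly_cmp) (use assms in \<open>auto intro: mult_left_le_one_le mult_left_le\<close>)
  also have "\<dots> \<le> pI a b x (-x) 0"
    by (rule split_le) (use assms in \<open>auto intro: mult_left_le_one_le mult_left_le\<close>)
  finally show ?thesis unfolding pI_def Beta1[OF assms(1,2)] using assms by (simp add: algebra_simps)
qed

lemma absbound: fixes d e :: real assumes "0 < e" shows "\<bar>d\<bar> \<le> e + d^2 / (4*e)"
proof -
  have "0 \<le> (\<bar>d\<bar> - 2*e)^2" by simp
  then have "4*e*\<bar>d\<bar> \<le> 4*e*e + d^2" by (simp add: power2_eq_square algebra_simps)
  then show ?thesis using assms by (simp add: field_simps)
qed

lemma Ix_L3: assumes "0 < a" "0 < b" "x \<in> {0..1}" "0 < e"
  shows "Ix a b x \<le> (max 0 (x - a/(a+b)) + e) * Beta a b +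
     (Beta (a+2) b - 2*(a/(a+b)) * Beta (a+1) b + (a/(a+b))^2 * Beta a b) / (4*e)"
proof -
  define m where "m = a/(a+b)"
  have "Ix a b x \<le> integral {0..x} (\<lambda>t. ((max 0 (x - m) + e + m^2/(4*e)) + (-2*m/(4*e))*t + (1/(4*e))*t^2) * u a b t)"
    unfolding Ix_poly
  proof (rule poly_cmp[OF assms(1-3)])
    fix t assume t: "t \<in> {0..x}"
    have l1: "x - t \<le> max 0 (x - m) + \<bar>m - t\<bar>" by auto
    have l2: "\<bar>m - t\<bar> \<le> e + (m - t)^2/(4*e)" by (rule absbound[OF assms(4)])
    have le: "x - t \<le> max 0 (x - m) + (e + (m - t)\<^sup>2 / (4 * e))" using l1 l2 by linarith
    have eq: "max 0 (x - m) + e + m\<^sup>2 / (4 * e) + - 2 * m / (4 * e) * t + 1 / (4 * e) * t\<^sup>2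
       = max 0 (x - m) + (e + (m - t)\<^sup>2 / (4 * e))"
      using assms(4) by (simp add: power2_eq_square field_simps)
    show "x + -1 * t + 0 * t\<^sup>2 \<le> max 0 (x - m) + e + m\<^sup>2 / (4 * e) + - 2 * m / (4 * e) * t + 1 / (4 * e) * t\<^sup>2"
      using le eq by simp
  qed
  also have "\<dots> \<le> pI a b (max 0 (x - m) + e + m^2/(4*e)) (-2*m/(4*e)) (1/(4*e))"
  proof (rule split_le[OF assms(1-3)])
    fix t
    have "0 \<le> max 0 (x - m) + e + (m - t)^2/(4*e)" using assms(4) by auto
    moreover have "max 0 (x - m) + e + m\<^sup>2 / (4 * e) + - 2 * m / (4 * e) * t + 1 / (4 * e) * t\<^sup>2
       = max 0 (x - m) + e + (m - t)\<^sup>2 / (4 * e)"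
      using assms(4) by (simp add: power2_eq_square field_simps)
    ultimately show "0 \<le> max 0 (x - m) + e + m\<^sup>2 / (4 * e) + - 2 * m / (4 * e) * t + 1 / (4 * e) * t\<^sup>2"
      by simp
  qed
  finally have fin: "Ix a b x \<le> pI a b (max 0 (x - m) + e + m^2/(4*e)) (-2*m/(4*e)) (1/(4*e))" .
  have eqp: "pI a b (max 0 (x - m) + e + m^2/(4*e)) (-2*m/(4*e)) (1/(4*e)) =
     (max 0 (x - m) + e) * Beta a b + (Beta (a+2) b - 2*m * Beta (a+1) b + m^2 * Beta a b) / (4*e)"
    unfolding pI_def using assms(4) by (simp add: field_simps)
  show ?thesis using fin eqp unfolding m_def by linarith
qed

lemma Ix_L4: assumes "0 < a" "0 < b" "x \<in> {0..1}"
  shows "x * Beta a b - (x+1) * Beta (a+1) b + Beta (a+2) b \<le> Ix a b x"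
proof -
  have "pI a b x (-x-1) 1 \<le> integral {0..x} (\<lambda>t. (x + (-x-1)*t + 1*t^2) * u a b t)"
  proof (rule split_ge[OF assms(1-3)])
    fix t assume t: "t \<in> {x..1}"
    have "x + (-x-1)*t + 1*t^2 = (1-t)*(x-t)" by (simp add: power2_eq_square algebra_simps)
    also have "\<dots> \<le> 0" using t by (auto intro: mult_nonneg_nonpos)
    finally show "x + (-x-1)*t + 1*t^2 \<le> 0" .
  qed
  also have "\<dots> \<le> Ix a b x" unfolding Ix_poly
  proof (rule poly_cmp[OF assms(1-3)])
    fix t assume t: "t \<in> {0..x}"
    have "x + -1 * t + 0 * t\<^sup>2 - (x + (-x-1)*t + 1*t^2) = t*(x-t)" by (simp add: power2_eq_square algebra_simps)
    also have "\<dots> \<ge> 0" using t by auto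
    finally show "x + (-x-1)*t + 1*t^2 \<le> x + -1 * t + 0 * t\<^sup>2" by simp
  qed
  finally have "pI a b x (-x-1) 1 \<le> Ix a b x" .
  moreover have "pI a b x (-x-1) 1 = x * Beta a b - (x+1) * Beta (a+1) b + Beta (a+2) b"
    unfolding pI_def by (simp add: algebra_simps)
  ultimately show ?thesis by linarith
qed

lemma int_cdf_1: assumes "0 < a" "0 < b"
  shows "integral {0..1} (beta_cdf a b) = 1 - a/(a+b)"
proof -
  have "integral {0..1} (beta_cdf a b) = Ix a b 1 / Beta a b" using cdf_int[OF assms, of 1] by simp
  also have "Ix a b 1 = pI a b 1 (-1) 0" unfolding Ix_poly
    by (rule integral_unique[OF poly_hasint[OF assms]])
  also have "pI a b 1 (-1) 0 = (1 - a/(a+b)) * Beta a b"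
    unfolding pI_def Beta1[OF assms(1,2)] by (simp add: algebra_simps)
  finally show ?thesis using Beta_pos[OF assms] by simp
qed




lemma cdf0: "beta_cdf a b 0 = 0" by (simp add: beta_cdf_def)
lemma cdf1: "beta_cdf a b 1 = 1" by (simp add: beta_cdf_def)

lemma mvt':
  fixes f f' :: "real \<Rightarrow> real"
  assumes "x < y" "continuous_on {x..y} f" "\<And>z. x < z \<Longrightarrow> z < y \<Longrightarrow> (f has_real_derivative f' z) (at z)"
  shows "\<exists>z. x < z \<and> z < y \<and> f y - f x = (y - x) * f' z"
proof -
  from MVT[OF assms(1,2)] obtain l z where z: "x < z" "z < y" "DERIV f z :> l" "f y - f x = (y - x) * l"
    using assms(3) by (force simp: real_differentiable_def)
  then have "l = f' z" using assms(3)[of z] DERIV_unique by blast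
  then show ?thesis using z by blast
qed

lemma sign_helper: fixes c v d :: real assumes "0 < c" "v = c * d"
  shows "(v < 0 \<longrightarrow> d < 0) \<and> (0 < v \<longrightarrow> 0 < d)"
  using assms by (auto simp: zero_less_mult_iff mult_less_0_iff)

lemma u_div_exp: assumes "0 < a" "0 < b" "0 < t" "t < 1"
  shows "u a b t / Beta a b = exp ((a-1) * ln t + (b-1) * ln (1-t) - ln (Beta a b))"
  using assms Beta_pos[OF assms(1,2)] by (simp add: u_def powr_def exp_add exp_diff)

lemma beta_cx:
  assumes a1: "0 < a1" and b1: "0 < b1" and a2: "0 < a2" and b2: "0 < b2"
    and lt: "a1 < a2" "b1 < b2" and mean: "a1/(a1+b1) = a2/(a2+b2)" and x: "x \<in> {0..1}"
  shows "integral {0..x} (beta_cdf a2 b2) \<le> integral {0..x} (beta_cdf a1 b1)"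
proof -
  define h where "h t = beta_cdf a1 b1 t - beta_cdf a2 b2 t" for t
  define dh where "dh t = u a1 b1 t / Beta a1 b1 - u a2 b2 t / Beta a2 b2" for t
  define \<phi> where "\<phi> t = (a1-a2)*ln t + (b1-b2)*ln(1-t) + (ln (Beta a2 b2) - ln (Beta a1 b1))" for t
  have hc: "continuous_on {0..1} h" unfolding h_def
    by (intro continuous_on_diff cdf_cont a1 b1 a2 b2)
  have hd: "(h has_real_derivative dh z) (at z)" if "0 < z" "z < 1" for z
    unfolding h_def[abs_def] dh_def by (intro DERIV_diff cdf_deriv a1 b1 a2 b2 that)
  have sgn: "(0 < dh z \<longrightarrow> 0 < \<phi> z) \<and> (dh z < 0 \<longrightarrow> \<phi> z < 0)" if z: "0 < z" "z < 1" for z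
  proof -
    define L1 where "L1 = (a1-1) * ln z + (b1-1) * ln (1-z) - ln (Beta a1 b1)"
    define L2 where "L2 = (a2-1) * ln z + (b2-1) * ln (1-z) - ln (Beta a2 b2)"
    have "dh z = exp L1 - exp L2" unfolding dh_def L1_def L2_def
      using u_div_exp[OF a1 b1 z] u_div_exp[OF a2 b2 z] by simp
    moreover have "\<phi> z = L1 - L2" unfolding \<phi>_def L1_def L2_def by (simp add: algebra_simps)
    ultimately show ?thesis by auto
  qed
  have quasi: "\<phi> z < 0" if "0 < z0" "z0 < z" "z < z1" "z1 < 1" "\<phi> z0 < 0" "\<phi> z1 < 0" for z0 z z1
  proof -
    define \<theta> where "\<theta> = (z - z0) / (z1 - z0)"
    have th: "0 \<le> \<theta>" "\<theta> \<le> 1" using that by (auto simp: \<theta>_def field_simps)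
    have th1: "\<theta> * (z1 - z0) = z - z0" using that by (simp add: \<theta>_def)
    have "(1 - \<theta>) * z0 + \<theta> * z1 = z0 + \<theta> * (z1 - z0)" by (simp add: algebra_simps)
    then have e1: "(1 - \<theta>) * z0 + \<theta> * z1 = z" using th1 by simp
    have "(1 - \<theta>) * (1 - z0) + \<theta> * (1 - z1) = 1 - z0 - \<theta> * (z1 - z0)" by (simp add: algebra_simps)
    then have e2: "(1 - \<theta>) * (1 - z0) + \<theta> * (1 - z1) = 1 - z" using th1 by simp
    have l1: "(1 - \<theta>) * ln z0 + \<theta> * ln z1 \<le> ln z"
      using concave_onD[OF ln_concave, of \<theta> z0 z1] th that e1 by auto
    have l2: "(1 - \<theta>) * ln (1 - z0) + \<theta> * ln (1 - z1) \<le> ln (1 - z)"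
      using concave_onD[OF ln_concave, of \<theta> "1 - z0" "1 - z1"] th that e2 by auto
    have "(a1-a2) * ln z \<le> (a1-a2) * ((1 - \<theta>) * ln z0 + \<theta> * ln z1)"
      using l1 lt by (intro mult_left_mono_neg) auto
    moreover have "(b1-b2) * ln (1 - z) \<le> (b1-b2) * ((1 - \<theta>) * ln (1 - z0) + \<theta> * ln (1 - z1))"
      using l2 lt by (intro mult_left_mono_neg) auto
    ultimately have "\<phi> z \<le> (1 - \<theta>) * \<phi> z0 + \<theta> * \<phi> z1"
      unfolding \<phi>_def by (simp add: algebra_simps)
    also have "\<dots> < 0"
    proof -
      have "(1 - \<theta>) * \<phi> z0 \<le> 0" "\<theta> * \<phi> z1 \<le> 0"
        using th that by (auto intro: mult_nonneg_nonpos)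
      moreover have "(1 - \<theta>) * \<phi> z0 < 0 \<or> \<theta> * \<phi> z1 < 0"
        using th that by (cases "\<theta> = 1") (auto intro: mult_pos_neg)
      ultimately show ?thesis by linarith
    qed
    finally show ?thesis .
  qed
  have h0: "h 0 = 0" and h1: "h 1 = 0" by (simp_all add: h_def cdf0 cdf1)
  have SC: "h y \<le> 0" if xy: "0 \<le> x'" "x' < y" "y \<le> 1" and hx: "h x' < 0" for x' y
  proof (rule ccontr)
    assume hy: "\<not> h y \<le> 0"
    have x0: "0 < x'" using hx h0 xy by (cases "x' = 0") auto
    have y1: "y < 1" using hy h1 xy by (cases "y = 1") auto
    obtain z0 where z0: "0 < z0" "z0 < x'" "h x' - h 0 = (x' - 0) * dh z0"
      using mvt'[OF x0 continuous_on_subset[OF hc], of dh] hd xy by force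
    obtain z where z: "x' < z" "z < y" "h y - h x' = (y - x') * dh z"
      using mvt'[OF xy(2) continuous_on_subset[OF hc], of dh] hd xy x0 y1 by force
    obtain z1 where z1: "y < z1" "z1 < 1" "h 1 - h y = (1 - y) * dh z1"
      using mvt'[OF y1 continuous_on_subset[OF hc], of dh] hd xy x0 by force
    have "dh z0 < 0" using sign_helper[OF x0 z0(3)[simplified]] hx h0 by simp
    then have p0: "\<phi> z0 < 0" using sgn[of z0] z0 xy by auto
    have "dh z1 < 0" using sign_helper[of "1 - y" "h 1 - h y" "dh z1"] z1 y1 hy h1 by simp
    then have p1: "\<phi> z1 < 0" using sgn[of z1] z1 xy by auto
    have "0 < dh z" using sign_helper[of "y - x'" "h y - h x'" "dh z"] z xy hy hx by simp
    then have "0 < \<phi> z" using sgn[of z] z z0 z1 by auto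
    moreover have "\<phi> z < 0" by (rule quasi[OF _ _ _ _ p0 p1]) (use z0 z z1 in auto)
    ultimately show False by simp
  qed
  define G where "G t = integral {0..t} (beta_cdf a1 b1) - integral {0..t} (beta_cdf a2 b2)" for t
  have Gc: "continuous_on {0..1} G" unfolding G_def
    by (intro continuous_on_diff indefinite_integral_continuous_1 integrable_continuous_interval
        cdf_cont a1 b1 a2 b2)
  have Gd: "(G has_real_derivative h z) (at z)" if z: "0 < z" "z < 1" for z
  proof -
    have "((\<lambda>t. integral {0..t} (beta_cdf a1 b1)) has_real_derivative beta_cdf a1 b1 z) (at z)"
      by (rule int_deriv[OF integrable_continuous_interval[OF cdf_cont[OF a1 b1]] z
          DERIV_isCont[OF cdf_deriv[OF a1 b1 z]]])
    moreover have "((\<lambda>t. integral {0..t} (beta_cdf a2 b2)) has_real_derivative beta_cdf a2 b2 z) (at z)"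
      by (rule int_deriv[OF integrable_continuous_interval[OF cdf_cont[OF a2 b2]] z
          DERIV_isCont[OF cdf_deriv[OF a2 b2 z]]])
    ultimately show ?thesis unfolding G_def[abs_def] h_def by (rule DERIV_diff)
  qed
  have G0: "G 0 = 0" by (simp add: G_def)
  have G1: "G 1 = 0" using int_cdf_1[OF a1 b1] int_cdf_1[OF a2 b2] mean by (simp add: G_def)
  have "0 \<le> G x"
  proof (rule ccontr)
    assume neg: "\<not> 0 \<le> G x"
    have x0: "0 < x" using neg G0 x by (cases "x = 0") auto
    have x1: "x < 1" using neg G1 x by (cases "x = 1") auto
    obtain z0 where z0: "0 < z0" "z0 < x" "G x - G 0 = (x - 0) * h z0"
      using mvt'[OF x0 continuous_on_subset[OF Gc], of h] Gd x1 by force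
    obtain z1 where z1: "x < z1" "z1 < 1" "G 1 - G x = (1 - x) * h z1"
      using mvt'[OF x1 continuous_on_subset[OF Gc], of h] Gd x0 by force
    have "h z0 < 0" using sign_helper[OF x0 z0(3)[simplified]] neg G0 by simp
    moreover have "0 < h z1" using sign_helper[of "1 - x" "G 1 - G x" "h z1"] z1 x1 neg G1 by simp
    ultimately show False using SC[of z0 z1] z0 z1 by auto
  qed
  then show ?thesis by (simp add: G_def)
qed



lemma D_pos: "0 < M \<Longrightarrow> M < 1 \<Longrightarrow> 0 < D M"
  unfolding D_def by (simp add: power2_eq_square mult_less_cancel_left1 algebra_simps)

lemma FMV_0: "FMV M 0 = (\<lambda>t. if t < M then 0 else 1)"
  by (simp add: FMV_def fun_eq_iff)

lemma FMV_D: "D M \<noteq> 0 \<Longrightarrow> FMV M (D M) = (\<lambda>t. if t < 0 then 0 else if t < 1 then 1 - M else 1)"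
  by (simp add: FMV_def fun_eq_iff)

lemma FMV_mid: "0 < V \<Longrightarrow> V < D M \<Longrightarrow> FMV M V = beta_cdf (beta_alpha M V) (beta_beta M V)"
  by (simp add: FMV_def fun_eq_iff)

lemma params:
  assumes M: "0 < M" "M < 1" and V: "0 < V" "V < D M"
  shows "0 < beta_alpha M V" "0 < beta_beta M V"
    "beta_alpha M V / (beta_alpha M V + beta_beta M V) = M"
    "beta_alpha M V * (beta_alpha M V + 1) /
       ((beta_alpha M V + beta_beta M V) * (beta_alpha M V + beta_beta M V + 1)) = M^2 + V"
proof -
  define s where "s = (D M - V) / V"
  have s: "0 < s" using V by (simp add: s_def)
  have a: "beta_alpha M V = M * s" unfolding beta_alpha_def s_def D_def by simp
  have b: "beta_beta M V = (1 - M) * s" unfolding beta_beta_def s_def D_def by simp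
  have ab: "beta_alpha M V + beta_beta M V = s" unfolding a b by (simp add: algebra_simps)
  show "0 < beta_alpha M V" "0 < beta_beta M V" using a b s M by auto
  show "beta_alpha M V / (beta_alpha M V + beta_beta M V) = M"
    by (subst ab, subst a) (use s in simp)
  have s1: "s + 1 = D M / V" using V by (simp add: s_def field_simps)
  have "beta_alpha M V * (beta_alpha M V + 1) /
       ((beta_alpha M V + beta_beta M V) * (beta_alpha M V + beta_beta M V + 1)) =
     M * (M * s + 1) / (s + 1)"
  proof -
    have "beta_alpha M V * (beta_alpha M V + 1) /
       ((beta_alpha M V + beta_beta M V) * (beta_alpha M V + beta_beta M V + 1)) =
       (M * s) * (M * s + 1) / (s * (s + 1))" unfolding ab by (simp only: a)
    also have "\<dots> = (M * (M * s + 1) / (s + 1)) * (s / s)" by (simp only: times_divide_times_eq mult_ac)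
    also have "\<dots> = M * (M * s + 1) / (s + 1)" using s by simp
    finally show ?thesis .
  qed
  also have "\<dots> = M^2 + D M / (s + 1)" using s by (simp add: field_simps D_def power2_eq_square)
  also have "D M / (s + 1) = V" unfolding s1 using V by simp
  finally show "beta_alpha M V * (beta_alpha M V + 1) /
       ((beta_alpha M V + beta_beta M V) * (beta_alpha M V + beta_beta M V + 1)) = M^2 + V" .
qed

lemma params_mono:
  assumes M: "0 < M" "M < 1" and V: "0 < V1" "V1 < V2" "V2 < D M"
  shows "beta_alpha M V2 < beta_alpha M V1" "beta_beta M V2 < beta_beta M V1"
proof -
  have "D M / V2 < D M / V1" using V by (intro divide_strict_left_mono) auto
  then have "D M / V2 - 1 < D M / V1 - 1" by simp
  moreover have "beta_alpha M V = M * (D M / V - 1)" "beta_beta M V = (1 - M) * (D M / V - 1)"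
    if "0 < V" for V
    using that unfolding beta_alpha_def beta_beta_def D_def by (simp_all add: field_simps)
  ultimately show "beta_alpha M V2 < beta_alpha M V1" "beta_beta M V2 < beta_beta M V1"
    using V M by auto
qed

definition J :: "real \<Rightarrow> real \<Rightarrow> real \<Rightarrow> real" where
  "J M V x = integral {0..x} (FMV M V)"

lemma J_mid: assumes M: "0 < M" "M < 1" and V: "0 < V" "V < D M" and x: "x \<in> {0..1}"
  shows "J M V x = Ix (beta_alpha M V) (beta_beta M V) x / Beta (beta_alpha M V) (beta_beta M V)"
  unfolding J_def FMV_mid[OF V] using cdf_int[OF params(1,2)[OF M V] x] .

lemma J_0: assumes M: "0 < M" "M < 1" and x: "x \<in> {0..1}"
  shows "J M 0 x = max 0 (x - M)"
proof -
  have z: "((\<lambda>t. if t < M then 0 else 1::real) has_integral 0) {0..y}" if "y \<le> M" for y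
    by (rule has_integral_spike_finite[where S="{M}" and f="\<lambda>t. 0"]) (use that in auto)
  show ?thesis
  proof (cases "x \<le> M")
    case True
    then show ?thesis unfolding J_def FMV_0 using z[OF True] x by (simp add: integral_unique)
  next
    case False
    have o: "((\<lambda>t. if t < M then 0 else 1::real) has_integral (x - M)) {M..x}"
    proof -
      have c1: "((\<lambda>t. 1::real) has_integral (x - M)) {M..x}"
        using has_integral_const_real[of "1::real" M x] False by simp
      show ?thesis by (rule has_integral_spike_finite[OF _ _ c1, where S="{}"]) auto
    qed
    have "((\<lambda>t. if t < M then 0 else 1::real) has_integral (0 + (x - M))) {0..x}"
      by (rule has_integral_combine[OF _ _ z o]) (use M False in auto)
    then show ?thesis unfolding J_def FMV_0 using False by (simp add: integral_unique)
  qed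
qed

lemma J_D: assumes M: "0 < M" "M < 1" and x: "x \<in> {0..1}"
  shows "J M (D M) x = x * (1 - M)"
proof -
  have c1: "((\<lambda>t. 1 - M) has_integral (x * (1 - M))) {0..x}"
    using has_integral_const_real[of "1 - M" 0 x] x by simp
  have "((\<lambda>t. if t < 0 then 0 else if t < 1 then 1 - M else 1) has_integral (x * (1 - M))) {0..x}"
    by (rule has_integral_spike_finite[OF _ _ c1, where S="{1}"]) (use x in auto)
  then show ?thesis unfolding J_def FMV_D[OF D_pos[OF M, THEN less_imp_neq, THEN not_sym]]
    by (simp add: integral_unique)
qed

lemma J_bounds:
  assumes M: "0 < M" "M < 1" and V: "0 < V" "V < D M" and x: "x \<in> {0..1}"
  shows "max 0 (x - M) \<le> J M V x" "J M V x \<le> x * (1 - M)"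
    "\<And>e. 0 < e \<Longrightarrow> J M V x \<le> max 0 (x - M) + e + V / (4*e)"
    "x * (1 - M) - (D M - V) \<le> J M V x"
proof -
  define a where "a = beta_alpha M V"
  define b where "b = beta_beta M V"
  have a: "0 < a" and b: "0 < b" using params(1,2)[OF M V] by (simp_all add: a_def b_def)
  have m: "a/(a+b) = M" using params(3)[OF M V] by (simp add: a_def b_def)
  have q: "a*(a+1)/((a+b)*(a+b+1)) = M^2 + V" using params(4)[OF M V] by (simp add: a_def b_def)
  define B where "B = Beta a b"
  have B: "0 < B" using Beta_pos[OF a b] by (simp add: B_def)
  have B1: "Beta (a+1) b = M * B" using Beta1[OF a b] m by (simp add: B_def)
  have B2: "Beta (a+2) b = (M^2 + V) * B" using Beta2[OF a b] q by (simp add: B_def)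
  have JJ: "J M V x = Ix a b x / B" using J_mid[OF M V x] by (simp add: a_def b_def B_def)
  have l1: "(x - M) * B \<le> Ix a b x" using Ix_L1[OF a b x] m by (simp add: B_def)
  have l0: "0 \<le> Ix a b x" using Ix_nonneg[OF a b x] .
  show "max 0 (x - M) \<le> J M V x" unfolding JJ using l1 l0 B by (simp add: pos_le_divide_eq)
  have l2: "Ix a b x \<le> x * (1 - M) * B" using Ix_L2[OF a b x] m by (simp add: B_def)
  show "J M V x \<le> x * (1 - M)" unfolding JJ using l2 B by (simp add: pos_divide_le_eq)
  show "J M V x \<le> max 0 (x - M) + e + V / (4*e)" if e: "0 < e" for e
  proof -
    have "Ix a b x \<le> (max 0 (x - M) + e) * B + ((M^2 + V) * B - 2*M*(M*B) + M^2 * B) / (4*e)"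
      using Ix_L3[OF a b x e] m B1 B2 by (simp add: B_def)
    also have "\<dots> = (max 0 (x - M) + e + V / (4*e)) * B"
      using e by (simp add: field_simps power2_eq_square)
    finally show ?thesis unfolding JJ using B by (simp add: pos_divide_le_eq)
  qed
  have "x * B - (x+1) * (M * B) + (M^2 + V) * B \<le> Ix a b x"
    using Ix_L4[OF a b x] B1 B2 by (simp add: B_def)
  moreover have "x * B - (x+1) * (M * B) + (M^2 + V) * B = (x * (1 - M) - (D M - V)) * B"
    by (simp add: D_def algebra_simps power2_eq_square)
  ultimately show "x * (1 - M) - (D M - V) \<le> J M V x" unfolding JJ using B
    by (simp add: pos_le_divide_eq)
qed

lemma J_mono_mid:
  assumes M: "0 < M" "M < 1" and V: "0 < V1" "V1 < V2" "V2 < D M" and x: "x \<in> {0..1}"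
  shows "J M V1 x \<le> J M V2 x"
proof -
  have V1: "0 < V1" "V1 < D M" and V2: "0 < V2" "V2 < D M" using V by auto
  show ?thesis
    unfolding J_def FMV_mid[OF V1] FMV_mid[OF V2]
    by (rule beta_cx[OF params(1,2)[OF M V2] params(1,2)[OF M V1] params_mono[OF M V]
        _ x]) (simp add: params(3)[OF M V1] params(3)[OF M V2])
qed

lemma J_mono:
  assumes M: "0 < M" "M < 1" and V: "0 \<le> V1" "V1 \<le> V2" "V2 \<le> D M" and x: "x \<in> {0..1}"
  shows "J M V1 x \<le> J M V2 x"
proof -
  have h1: "x * M \<le> M" using M x by (intro mult_left_le_one_le) auto
  have h2: "0 \<le> x * (1 - M)" using M x by simp
  have h3: "x * (1 - M) = x - x * M" by (simp add: algebra_simps)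
  have ineq: "max 0 (x - M) \<le> x * (1 - M)"
    unfolding max_def using h1 h2 h3 by auto
  consider "V1 = V2" | "V1 = 0" "V1 < V2" | "V2 = D M" "V1 < V2" | "0 < V1" "V1 < V2" "V2 < D M"
    using V by force
  then show ?thesis
  proof cases
    case 2
    show ?thesis
    proof (cases "V2 = D M")
      case True then show ?thesis using J_0[OF M x] J_D[OF M x] 2 ineq by simp
    next
      case False then show ?thesis using J_0[OF M x] J_bounds(1)[OF M _ _ x, of V2] 2 V by simp
    qed
  next
    case 3
    show ?thesis
    proof (cases "V1 = 0")
      case True then show ?thesis using J_0[OF M x] J_D[OF M x] 3 ineq by simp
    next
      case False then show ?thesis using J_D[OF M x] J_bounds(2)[OF M _ _ x, of V1] 3 V by simp
    qed
  next
    case 4 then show ?thesis by (rule J_mono_mid[OF M _ _ _ x])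
  qed simp
qed



theorem corollary5:
  fixes M :: real
  assumes "0 < M" and "M < 1"
  shows "(\<forall>V1\<in>{0..D M}. \<forall>V2\<in>{0..D M}. ssd (FMV M V1) (FMV M V2) \<or> ssd (FMV M V2) (FMV M V1))
    \<and> (\<forall>V\<in>{0..D M}. ssd (FMV M V) (FMV M 0))
    \<and> (\<forall>V\<in>{0..D M}. ssd (FMV M (D M)) (FMV M V))
    \<and> (\<forall>V1 V2. 0 < V1 \<and> V1 < V2 \<and> V2 < D M \<longrightarrow>
          ssd (FMV M (D M)) (FMV M V2) \<and> ssd (FMV M V2) (FMV M V1) \<and> ssd (FMV M V1) (FMV M 0))
    \<and> ssd_sup {FMV M V | V. 0 < V \<and> V < D M} (FMV M 0)
    \<and> ssd_inf {FMV M V | V. 0 < V \<and> V < D M} (FMV M (D M))"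
proof -
  note M = assms
  have Dp: "0 < D M" by (rule D_pos[OF M])
  have mono: "J M V1 x \<le> J M V2 x" if "0 \<le> V1" "V1 \<le> V2" "V2 \<le> D M" "x \<in> {0..1}" for V1 V2 x
    by (rule J_mono[OF M that])
  have ssdJ: "ssd (FMV M V1) (FMV M V2) \<longleftrightarrow> (\<forall>x\<in>{0..1}. J M V2 x \<le> J M V1 x)" for V1 V2
    by (simp add: ssd_def J_def)
  define S where "S = {FMV M V | V. 0 < V \<and> V < D M}"
  have c1: "\<forall>V1\<in>{0..D M}. \<forall>V2\<in>{0..D M}. ssd (FMV M V1) (FMV M V2) \<or> ssd (FMV M V2) (FMV M V1)"
  proof (intro ballI)
    fix V1 V2 assume "V1 \<in> {0..D M}" "V2 \<in> {0..D M}"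
    then show "ssd (FMV M V1) (FMV M V2) \<or> ssd (FMV M V2) (FMV M V1)"
      unfolding ssdJ using mono[of V1 V2] mono[of V2 V1] by (cases "V1 \<le> V2") auto
  qed
  have c2: "\<forall>V\<in>{0..D M}. ssd (FMV M V) (FMV M 0)"
    unfolding ssdJ using mono[of 0] by auto
  have c3: "\<forall>V\<in>{0..D M}. ssd (FMV M (D M)) (FMV M V)"
    unfolding ssdJ using mono[of _ "D M"] by auto
  have c4: "\<forall>V1 V2. 0 < V1 \<and> V1 < V2 \<and> V2 < D M \<longrightarrow>
          ssd (FMV M (D M)) (FMV M V2) \<and> ssd (FMV M V2) (FMV M V1) \<and> ssd (FMV M V1) (FMV M 0)"
    unfolding ssdJ using mono by (meson less_eq_real_def order.trans order_refl)
  have c5: "ssd_sup S (FMV M 0)"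
    unfolding ssd_sup_def
  proof (intro conjI allI impI ballI)
    fix F assume "F \<in> S"
    then obtain V where V: "F = FMV M V" "0 < V" "V < D M" by (auto simp: S_def)
    then show "ssd F (FMV M 0)" unfolding V ssdJ using mono[of 0 V] by auto
  next
    fix H assume H: "\<forall>F\<in>S. ssd F H"
    show "ssd (FMV M 0) H" unfolding ssd_def
    proof
      fix x :: real assume x: "x \<in> {0..1}"
      have hH: "integral {0..x} H \<le> J M V x" if "0 < V" "V < D M" for V
      proof -
        have "FMV M V \<in> S" using that by (auto simp: S_def)
        then have "ssd (FMV M V) H" using H by blast
        then show ?thesis using x by (simp add: ssd_def J_def)
      qed
      show "integral {0..x} H \<le> integral {0..x} (FMV M 0)"
      proof (rule ccontr)
        assume neg: "\<not> ?thesis"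
        have eq: "integral {0..x} (FMV M 0) = max 0 (x - M)" using J_0[OF M x] by (simp add: J_def)
        have gt: "max 0 (x - M) < integral {0..x} H"
          using neg unfolding eq by linarith
        define \<delta> where "\<delta> = integral {0..x} H - max 0 (x - M)"
        have d: "0 < \<delta>" using gt by (simp add: \<delta>_def)
        define V where "V = min (D M / 2) (\<delta> * \<delta> / 16)"
        have V: "0 < V" "V < D M" using Dp d by (auto simp: V_def)
        have e: "0 < \<delta> / 4" using d by simp
        have "V / (4 * (\<delta> / 4)) \<le> \<delta> / 16"
        proof -
          have "V \<le> \<delta> * \<delta> / 16" by (simp add: V_def)
          then have "V \<le> \<delta> / 16 * \<delta>" by simp
          then show ?thesis using d by (simp add: pos_divide_le_eq)
        qed
        moreover have "integral {0..x} H \<le> max 0 (x - M) + \<delta> / 4 + V / (4 * (\<delta> / 4))"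
          using hH[OF V] J_bounds(3)[OF M V x e] by linarith
        ultimately show False using d \<delta>_def by linarith
      qed
    qed
  qed
  have c6: "ssd_inf S (FMV M (D M))"
    unfolding ssd_inf_def
  proof (intro conjI allI impI ballI)
    fix F assume "F \<in> S"
    then obtain V where V: "F = FMV M V" "0 < V" "V < D M" by (auto simp: S_def)
    then show "ssd (FMV M (D M)) F" unfolding V ssdJ using mono[of V "D M"] by auto
  next
    fix H assume H: "\<forall>F\<in>S. ssd H F"
    show "ssd H (FMV M (D M))" unfolding ssd_def
    proof
      fix x :: real assume x: "x \<in> {0..1}"
      have hH: "J M V x \<le> integral {0..x} H" if "0 < V" "V < D M" for V
      proof -
        have "FMV M V \<in> S" using that by (auto simp: S_def)
        then have "ssd H (FMV M V)" using H by blast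
        then show ?thesis using x by (simp add: ssd_def J_def)
      qed
      show "integral {0..x} (FMV M (D M)) \<le> integral {0..x} H"
      proof (rule ccontr)
        assume neg: "\<not> ?thesis"
        have eq: "integral {0..x} (FMV M (D M)) = x * (1 - M)" using J_D[OF M x] by (simp add: J_def)
        have gt: "integral {0..x} H < x * (1 - M)"
          using neg unfolding eq by linarith
        define \<delta> where "\<delta> = x * (1 - M) - integral {0..x} H"
        have d: "0 < \<delta>" using gt by (simp add: \<delta>_def)
        define V where "V = max (D M / 2) (D M - \<delta> / 2)"
        have V: "0 < V" "V < D M" using Dp d by (auto simp: V_def)
        have "D M - \<delta> / 2 \<le> V" by (simp add: V_def)
        then show False using hH[OF V] J_bounds(4)[OF M V x] d \<delta>_def by linarith
      qed
    qed
  qed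
  show ?thesis using c1 c2 c3 c4 c5 c6 by (simp add: S_def)
qed


end
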